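(* Let $\alpha\in\mathbb{N}$ and let $Q_n(f)=\sum_{j=1}^n w_j f(\xi_j)$ be a quadrature rule with distinct points $\xi_1<\dots<\xi_n$ in $\mathbb{R}$ and arbitrary weights $w_j\in\mathbb{R}$. Let $\delta=\delta(n)\in(0,1]$ be such that no quadrature point $\xi_j$ lies in $(0,\delta)$. Then \[ e^{\mathrm{wor}}(Q_n,\mathscr{H}_\alpha)\geq C_\alpha\delta^{\alpha+1/2}, \] where $C_\alpha>0$ is independent of $\delta$. In particular, if $Q_n$ has no quadrature point in $(0,n^{-r})$ for some $r>0$, then $e^{\mathrm{wor}}(Q_n,\mathscr{H}_\alpha)\geq C_\alpha n^{-r\alpha-r/2}$.
   Context: Let $\rho(x)=\frac{1}{\sqrt{2\pi}}\mathrm{e}^{-x^2/2}$ and $L^2_\rho$ the space of (equivalence classes of) measurable $f:\mathbb{R}\to\mathbb{R}$ with $\|f\|_{L^2_\rho}^2=\int_\mathbb{R}|f(x)|^2\rho(x)\,\mathrm{d}x<\infty$. For $\alpha\in\mathbb{N}$, the weighted Sobolev space $\mathscr{H}_\alpha$ is the set of $f\in L^2_\rho$ having weak derivatives $f^{(\tau)}\in L^2_\rho$ for $\tau=1,\dots,\alpha$, with norm $\|f\|_\alpha=(\sum_{\tau=0}^\alpha\|f^{(\tau)}\|_{L^2_\rho}^2)^{1/2}$; elements are identified with their continuous representatives. Let $I(f)=\int_\mathbb{R}f(x)\rho(x)\,\mathrm{d}x$. For a quadrature rule $Q_n$, the worst-case error is $e^{\mathrm{wor}}(Q_n,\mathscr{H}_\alpha)=\sup_{0\neq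 f\in\mathscr{H}_\alpha}|I(f)-Q_n(f)|/\|f\|_\alpha$. *)

theory Defs
  imports "HOL-Analysis.Analysis"
begin

definition gauss_rho :: "real \<Rightarrow> real" where
  "gauss_rho x = exp (- (x^2) / 2) / sqrt (2 * pi)"

definition L2rho :: "(real \<Rightarrow> real) \<Rightarrow> bool" where
  "L2rho f \<longleftrightarrow> f \<in> borel_measurable borel \<and>
     integrable lborel (\<lambda>x. (f x)^2 * gauss_rho x)"

definition L2rho_norm_sq :: "(real \<Rightarrow> real) \<Rightarrow> real" where
  "L2rho_norm_sq f = (LINT x|lborel. (f x)^2 * gauss_rho x)"

definition test_fun :: "(real \<Rightarrow> real) \<Rightarrow> bool" where
  "test_fun \<phi> \<longleftrightarrow> (\<forall>k x. ((deriv ^^ k) \<phi>) differentiable (at x))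
      \<and> bounded {x. \<phi> x \<noteq> 0}"

definition weak_derivs :: "nat \<Rightarrow> (real \<Rightarrow> real) \<Rightarrow> (nat \<Rightarrow> real \<Rightarrow> real) \<Rightarrow> bool" where
  "weak_derivs \<alpha> f g \<longleftrightarrow> g 0 = f \<and>
     (\<forall>\<tau>\<in>{1..\<alpha>}. \<forall>\<phi>. test_fun \<phi> \<longrightarrow>
        (LINT x|lborel. f x * (deriv ^^ \<tau>) \<phi> x) = (-1)^\<tau> * (LINT x|lborel. g \<tau> x * \<phi> x))"

text \<open>Weighted Sobolev space H_alpha (continuous representatives).\<close>
definition sobH :: "nat \<Rightarrow> (real \<Rightarrow> real) \<Rightarrow> bool" where
  "sobH \<alpha> f \<longleftrightarrow> continuous_on UNIV f \<and>
     (\<exists>g. weak_derivs \<alpha> f g \<and> (\<forall>\<tau>\<le>\<alpha>. L2rho (g \<tau>)))"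

text \<open>Norm of H_alpha (weak derivatives are unique a.e., so this is well defined).\<close>
definition sob_norm :: "nat \<Rightarrow> (real \<Rightarrow> real) \<Rightarrow> real" where
  "sob_norm \<alpha> f = (let g = (SOME g. weak_derivs \<alpha> f g \<and> (\<forall>\<tau>\<le>\<alpha>. L2rho (g \<tau>)))
      in sqrt (\<Sum>\<tau>\<le>\<alpha>. L2rho_norm_sq (g \<tau>)))"

definition gauss_int :: "(real \<Rightarrow> real) \<Rightarrow> real" where
  "gauss_int f = (LINT x|lborel. f x * gauss_rho x)"

text \<open>Quadrature rule with points xi 0, ..., xi (n-1) and weights w.\<close>
definition quad :: "nat \<Rightarrow> (nat \<Rightarrow> real) \<Rightarrow> (nat \<Rightarrow> real) \<Rightarrow> (real \<Rightarrow> real) \<Rightarrow> real" where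
  "quad n w \<xi> f = (\<Sum>j<n. w j * f (\<xi> j))"

definition wce :: "nat \<Rightarrow> nat \<Rightarrow> (nat \<Rightarrow> real) \<Rightarrow> (nat \<Rightarrow> real) \<Rightarrow> ereal" where
  "wce \<alpha> n w \<xi> = (SUP f\<in>{f. sobH \<alpha> f \<and> f \<noteq> (\<lambda>_. 0)}.
      ereal (\<bar>gauss_int f - quad n w \<xi> f\<bar> / sob_norm \<alpha> f))"

end

theory Submission
  imports Defs
begin


definition Cinf :: "(real \<Rightarrow> real) \<Rightarrow> bool" where
  "Cinf f \<longleftrightarrow> (\<exists>S. f \<in> S \<and> (\<forall>u\<in>S. (\<forall>x. u differentiable (at x)) \<and> deriv u \<in> S))"

lemma CinfI:
  assumes "f \<in> S" "\<And>u x. u \<in> S \<Longrightarrow> u differentiable (at x)" "\<And>u. u \<in> S \<Longrightarrow> deriv u \<in> S"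
  shows "Cinf f"
  unfolding Cinf_def using assms by blast

lemma Cinf_differentiable: "Cinf f \<Longrightarrow> f differentiable (at x)"
  unfolding Cinf_def by blast

lemma Cinf_deriv: "Cinf f \<Longrightarrow> Cinf (deriv f)"
  unfolding Cinf_def by blast

lemma Cinf_funpow: "Cinf f \<Longrightarrow> Cinf ((deriv ^^ k) f)"
  by (induction k) (auto intro: Cinf_deriv)

lemma Cinf_has_deriv: "Cinf f \<Longrightarrow> (f has_real_derivative deriv f x) (at x)"
  using Cinf_differentiable DERIV_deriv_iff_real_differentiable by blast

lemma Cinf_funpow_has_deriv: "Cinf f \<Longrightarrow> ((deriv ^^ k) f has_real_derivative (deriv ^^ Suc k) f x) (at x)"
  using Cinf_has_deriv[OF Cinf_funpow] by simp

lemma Cinf_cont: "Cinf f \<Longrightarrow> continuous_on UNIV f"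
  by (meson Cinf_differentiable continuous_at_imp_continuous_on differentiable_imp_continuous_within)

lemma Cinf_poly: "real_polynomial_function p \<Longrightarrow> Cinf p"
proof (rule CinfI[where S="{p. real_polynomial_function p}"])
  fix u :: "real \<Rightarrow> real" and x assume "u \<in> {p. real_polynomial_function p}"
  then obtain p' where "\<forall>x. (u has_real_derivative p' x) (at x)"
    using has_real_derivative_polynomial_function by auto
  then show "u differentiable (at x)" using real_differentiable_def by blast
next
  fix u :: "real \<Rightarrow> real" assume "u \<in> {p. real_polynomial_function p}"
  then obtain p' where p': "real_polynomial_function p'" "\<forall>x. (u has_real_derivative p' x) (at x)"
    using has_real_derivative_polynomial_function by auto
  then have "deriv u = p'" using DERIV_imp_deriv by blast
  then show "deriv u \<in> {p. real_polynomial_function p}" using p' by simp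
qed auto

inductive_set PS :: "(real \<Rightarrow> real) set" where
  "Cinf a \<Longrightarrow> Cinf b \<Longrightarrow> (\<lambda>x. a x * b x) \<in> PS"
| "u \<in> PS \<Longrightarrow> v \<in> PS \<Longrightarrow> (\<lambda>x. u x + v x) \<in> PS"

lemma PS_closed: "u \<in> PS \<Longrightarrow> (\<forall>x. u differentiable (at x)) \<and> deriv u \<in> PS"
proof (induction rule: PS.induct)
  case (1 a b)
  have d: "((\<lambda>x. a x * b x) has_real_derivative (deriv a x * b x + a x * deriv b x)) (at x)" for x
    using DERIV_mult[OF Cinf_has_deriv[OF 1(1)] Cinf_has_deriv[OF 1(2)], of x]
    by (simp add: algebra_simps)
  then have "deriv (\<lambda>x. a x * b x) = (\<lambda>x. deriv a x * b x + a x * deriv b x)"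
    using DERIV_imp_deriv by blast
  moreover have "(\<lambda>x. deriv a x * b x + a x * deriv b x) \<in> PS"
    by (intro PS.intros Cinf_deriv 1)
  ultimately show ?case using d real_differentiable_def by auto
next
  case (2 u v)
  have du: "(u has_real_derivative deriv u x) (at x)" and dv: "(v has_real_derivative deriv v x) (at x)" for x
    using 2 DERIV_deriv_iff_real_differentiable by blast+
  have d: "((\<lambda>x. u x + v x) has_real_derivative (deriv u x + deriv v x)) (at x)" for x
    using DERIV_add[OF du dv] by simp
  then have "deriv (\<lambda>x. u x + v x) = (\<lambda>x. deriv u x + deriv v x)"
    using DERIV_imp_deriv by blast
  moreover have "(\<lambda>x. deriv u x + deriv v x) \<in> PS"
    using 2 by (intro PS.intros) auto
  ultimately show ?case using d real_differentiable_def by auto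
qed

lemma Cinf_mult: "Cinf a \<Longrightarrow> Cinf b \<Longrightarrow> Cinf (\<lambda>x. a x * b x)"
  by (rule CinfI[where S=PS]) (auto intro: PS.intros dest: PS_closed)

lemma Cinf_affine: assumes "Cinf f" shows "Cinf (\<lambda>x. f (c * x + d))"
proof (rule CinfI[where S="{w. \<exists>e u. Cinf u \<and> w = (\<lambda>x. e * u (c * x + d))}"])
  show "(\<lambda>x. f (c * x + d)) \<in> {w. \<exists>e u. Cinf u \<and> w = (\<lambda>x. e * u (c * x + d))}"
    using assms by (auto intro!: exI[of _ 1])
next
  fix w assume "w \<in> {w. \<exists>e u. Cinf u \<and> w = (\<lambda>x. e * u (c * x + d))}"
  then obtain e u where u: "Cinf u" and w: "w = (\<lambda>x. e * u (c * x + d))" by auto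
  have d: "(w has_real_derivative (e * c) * deriv u (c * x + d)) (at x)" for x
  proof -
    have "((\<lambda>x. c * x + d) has_real_derivative c) (at x)"
      by (auto intro!: derivative_eq_intros)
    from DERIV_chain2[OF Cinf_has_deriv[OF u] this]
    have "((\<lambda>x. u (c * x + d)) has_real_derivative deriv u (c * x + d) * c) (at x)" .
    from DERIV_cmult[OF this, of e] show ?thesis unfolding w by (simp add: algebra_simps)
  qed
  show "w differentiable (at x)" for x using d real_differentiable_def by blast
  have "deriv w = (\<lambda>x. (e * c) * deriv u (c * x + d))"
    using d DERIV_imp_deriv by blast
  then show "deriv w \<in> {w. \<exists>e u. Cinf u \<and> w = (\<lambda>x. e * u (c * x + d))}"
    using Cinf_deriv[OF u] by blast
qed




lemma poly_exp_lim:
  assumes "real_polynomial_function p"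
  shows "((\<lambda>t. p t * exp (-t)) \<longlongrightarrow> 0) at_top"
proof -
  obtain a n where p: "p = (\<lambda>x. \<Sum>i\<le>n. a i * x^i)"
    using real_polynomial_function_imp_sum[OF assms] by auto
  have "p t * exp (-t) = (\<Sum>i\<le>n. a i * (t^i / exp t))" for t
  proof -
    have "(\<Sum>i\<le>n. a i * (t^i / exp t)) = (\<Sum>i\<le>n. a i * t^i) / exp t"
      by (simp add: sum_divide_distrib)
    then show ?thesis by (simp add: p exp_minus divide_inverse)
  qed
  moreover have "((\<lambda>t. \<Sum>i\<le>n. a i * (t^i / exp t)) \<longlongrightarrow> (\<Sum>i\<le>n. a i * 0)) at_top"
    by (intro tendsto_sum tendsto_mult tendsto_const tendsto_power_div_exp_0)
  ultimately show ?thesis by simp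
qed

lemma rpf_id: "real_polynomial_function (\<lambda>t::real. t)" by (simp add: real_polynomial_function_eq)

definition E :: "real \<Rightarrow> real" where
  "E x = (if 0 < x then exp (-1/x) else 0)"

definition ES :: "(real \<Rightarrow> real) set" where
  "ES = {w. \<exists>q. real_polynomial_function q \<and> w = (\<lambda>x. if 0 < x then q (1/x) * exp (-1/x) else 0)}"

lemma ES_deriv:
  assumes q: "real_polynomial_function q"
  obtains q2 where "real_polynomial_function q2"
    "\<And>x. ((\<lambda>x. if 0 < x then q (1/x) * exp (-1/x) else 0) has_real_derivative
          (if 0 < x then q2 (1/x) * exp (-1/x) else 0)) (at x)"
proof -
  obtain q' where q': "real_polynomial_function q'" "\<And>x. (q has_real_derivative q' x) (at x)"
    using has_real_derivative_polynomial_function[OF q] by auto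
  define q2 where "q2 = (\<lambda>t. t * t * (q t - q' t))"
  have q2p: "real_polynomial_function q2"
    proof -
    have i: "real_polynomial_function (\<lambda>t::real. t)" by (simp add: real_polynomial_function_eq)
    show ?thesis unfolding q2_def
      by (rule real_polynomial_function.intros(4)[OF real_polynomial_function.intros(4)[OF i i] real_polynomial_function_diff[OF q q'(1)]])
  qed
  let ?u = "\<lambda>x. if 0 < x then q (1/x) * exp (-1/x) else 0"
  have "(?u has_real_derivative (if 0 < x then q2 (1/x) * exp (-1/x) else 0)) (at x)" for x
  proof (cases "x > 0")
    case True
    have d1: "((\<lambda>x. 1 / x) has_real_derivative - (1 / (x*x))) (at x)"
      using True by (auto intro!: derivative_eq_intros simp: power2_eq_square)
    have d2: "((\<lambda>x. q (1/x)) has_real_derivative q' (1/x) * (- (1 / (x*x)))) (at x)"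
      by (rule DERIV_chain2[OF q'(2) d1])
    have d3: "((\<lambda>x. exp (-1/x)) has_real_derivative exp (-1/x) * (1/(x*x))) (at x)"
      using True by (auto intro!: derivative_eq_intros simp: power2_eq_square)
    have d: "((\<lambda>x. q (1/x) * exp (-1/x)) has_real_derivative q2 (1/x) * exp (-1/x)) (at x)"
      using DERIV_mult[OF d2 d3] True by (simp add: q2_def field_simps)
    show ?thesis
      using has_field_derivative_transform_within_open[OF d, of "{0<..}" ?u] True by auto
  next
    case False
    show ?thesis
    proof (cases "x < 0")
      case True
      have "((\<lambda>x. 0) has_real_derivative 0) (at x)" by simp
      then show ?thesis
        using has_field_derivative_transform_within_open[of "\<lambda>x. 0" 0 x "{..<0}" ?u] True by auto
    next
      case False
      with \<open>\<not> x > 0\<close> have x0: "x = 0" by simp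
      have "((\<lambda>y. (?u y - ?u 0) / (y - 0)) \<longlongrightarrow> 0) (at 0)"
        unfolding filterlim_at_split
      proof
        show "((\<lambda>y. (?u y - ?u 0) / (y - 0)) \<longlongrightarrow> 0) (at_left 0)"
          by (rule tendsto_eventually) (auto simp: eventually_at_left_field intro!: exI[of _ "-1"])
      next
        have lim: "((\<lambda>t. (t * q t) * exp (-t)) \<longlongrightarrow> 0) at_top"
          by (rule poly_exp_lim, rule real_polynomial_function.intros(4)[OF rpf_id q])
        have "((\<lambda>y. (inverse y * q (inverse y)) * exp (- inverse y)) \<longlongrightarrow> 0) (at_right 0)"
          by (rule filterlim_compose[OF lim filterlim_inverse_at_top_right])
        then show "((\<lambda>y. (?u y - ?u 0) / (y - 0)) \<longlongrightarrow> 0) (at_right 0)"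
          apply (rule tendsto_cong[THEN iffD1, rotated])
          by (auto simp: eventually_at_right_field divide_inverse intro!: exI[of _ 1])
      qed
      then show ?thesis using x0 by (simp add: has_field_derivative_iff)
    qed
  qed
  then show ?thesis using that q2p by blast
qed

lemma Cinf_E: "Cinf E"
proof (rule CinfI[where S=ES])
  show "E \<in> ES" unfolding ES_def E_def
    by (auto intro!: exI[of _ "\<lambda>_. 1"])
next
  fix u x assume "u \<in> ES"
  then obtain q where q: "real_polynomial_function q" and u: "u = (\<lambda>x. if 0 < x then q (1/x) * exp (-1/x) else 0)"
    unfolding ES_def by auto
  obtain q2 where "real_polynomial_function q2" "\<And>x. (u has_real_derivative
          (if 0 < x then q2 (1/x) * exp (-1/x) else 0)) (at x)"
    using ES_deriv[OF q] u by metis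
  then show "u differentiable (at x)" using real_differentiable_def by blast
next
  fix u assume "u \<in> ES"
  then obtain q where q: "real_polynomial_function q" and u: "u = (\<lambda>x. if 0 < x then q (1/x) * exp (-1/x) else 0)"
    unfolding ES_def by auto
  obtain q2 where q2: "real_polynomial_function q2" "\<And>x. (u has_real_derivative
          (if 0 < x then q2 (1/x) * exp (-1/x) else 0)) (at x)"
    using ES_deriv[OF q] u by metis
  then have "deriv u = (\<lambda>x. if 0 < x then q2 (1/x) * exp (-1/x) else 0)"
    using DERIV_imp_deriv by blast
  then show "deriv u \<in> ES" unfolding ES_def using q2 by blast
qed




lemma compact_supp_integrable:
  fixes F :: "real \<Rightarrow> real"
  assumes "continuous_on UNIV F" "\<And>x. x \<notin> {a..b} \<Longrightarrow> F x = 0"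
  shows "integrable lborel F"
proof -
  have "set_integrable lborel {a..b} F"
    by (rule borel_integrable_atLeastAtMost') (rule continuous_on_subset[OF assms(1)], auto)
  moreover have "(\<lambda>x. indicator {a..b} x *\<^sub>R F x) = F"
  proof (rule ext)
    fix x show "indicator {a..b} x *\<^sub>R F x = F x"
      by (cases "x \<in> {a..b}") (auto simp: assms(2))
  qed
  ultimately show ?thesis unfolding set_integrable_def by simp
qed

lemma ibp:
  fixes u v u' v' :: "real \<Rightarrow> real"
  assumes du: "\<And>x. (u has_real_derivative u' x) (at x)"
    and dv: "\<And>x. (v has_real_derivative v' x) (at x)"
    and cu: "continuous_on UNIV u'" and cv: "continuous_on UNIV v'"
    and su: "\<And>x. x \<notin> {a..b} \<Longrightarrow> u x = 0" "\<And>x. x \<notin> {a..b} \<Longrightarrow> u' x = 0"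
  shows "(LINT x|lborel. u x * v' x) = - (LINT x|lborel. u' x * v x)"
    "integrable lborel (\<lambda>x. u x * v' x)" "integrable lborel (\<lambda>x. u' x * v x)"
proof -
  have cu0: "continuous_on UNIV u"
    using du by (meson DERIV_continuous continuous_at_imp_continuous_on)
  have cv0: "continuous_on UNIV v"
    using dv by (meson DERIV_continuous continuous_at_imp_continuous_on)
  have c1: "continuous_on UNIV (\<lambda>x. u x * v' x)" "continuous_on UNIV (\<lambda>x. u' x * v x)"
    by (auto intro!: continuous_intros cu cv cu0 cv0)
  show i1: "integrable lborel (\<lambda>x. u x * v' x)"
    by (rule compact_supp_integrable[OF c1(1), of a b]) (use su in auto)
  show i2: "integrable lborel (\<lambda>x. u' x * v x)"
    by (rule compact_supp_integrable[OF c1(2), of a b]) (use su in auto)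
  have ab: "a - 1 \<le> b + 1 \<or> {a..b} = {}" by auto
  define a' where "a' = min (a - 1) (b + 1)"
  have a'b: "a' \<le> b + 1" unfolding a'_def by simp
  have outs: "x \<notin> {a..b}" if "x \<notin> {a'..b+1}" for x using that unfolding a'_def by auto
  have "(LINT x|lborel. indicator {a'..b+1} x *\<^sub>R (u' x * v x + u x * v' x))
      = u (b+1) * v (b+1) - u a' * v a'"
  proof (rule integral_FTC_atLeastAtMost[OF a'b])
    fix x
    have "((\<lambda>x. u x * v x) has_real_derivative (u' x * v x + u x * v' x)) (at x)"
      using DERIV_mult[OF du dv, of x] by (simp add: algebra_simps)
    then show "((\<lambda>x. u x * v x) has_vector_derivative (u' x * v x + u x * v' x)) (at x within {a'..b+1})"
      by (simp add: has_real_derivative_iff_has_vector_derivative has_vector_derivative_at_within)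
  next
    show "continuous_on {a'..b+1} (\<lambda>x. u' x * v x + u x * v' x)"
      by (auto intro!: continuous_intros continuous_on_subset[OF cu] continuous_on_subset[OF cv]
          continuous_on_subset[OF cu0] continuous_on_subset[OF cv0])
  qed
  also have "\<dots> = 0"
    using su(1)[of "b+1"] su(1)[of a'] unfolding a'_def by auto
  finally have "(LINT x|lborel. indicator {a'..b+1} x *\<^sub>R (u' x * v x + u x * v' x)) = 0" .
  moreover have "(\<lambda>x. indicator {a'..b+1} x *\<^sub>R (u' x * v x + u x * v' x)) = (\<lambda>x. u' x * v x + u x * v' x)"
  proof (rule ext)
    fix x show "indicator {a'..b+1} x *\<^sub>R (u' x * v x + u x * v' x) = u' x * v x + u x * v' x"
      using outs[of x] su(1)[of x] su(2)[of x] by (cases "x \<in> {a'..b+1}") auto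
  qed
  ultimately have "(LINT x|lborel. u' x * v x + u x * v' x) = 0" by simp
  then show "(LINT x|lborel. u x * v' x) = - (LINT x|lborel. u' x * v x)"
    using Bochner_Integration.integral_add[OF i2 i1] by simp
qed

definition allderiv :: "(real \<Rightarrow> real) \<Rightarrow> bool" where
  "allderiv u \<longleftrightarrow> (\<forall>k x. ((deriv ^^ k) u) differentiable (at x))"

lemma Cinf_allderiv: "Cinf f \<Longrightarrow> allderiv f"
  unfolding allderiv_def using Cinf_funpow Cinf_differentiable by blast

lemma test_allderiv: "test_fun f \<Longrightarrow> allderiv f"
  unfolding allderiv_def test_fun_def by blast

lemma allderiv_has: "allderiv f \<Longrightarrow> ((deriv ^^ k) f has_real_derivative (deriv ^^ Suc k) f x) (at x)"
  unfolding allderiv_def using DERIV_deriv_iff_real_differentiable by fastforce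

lemma allderiv_cont: "allderiv f \<Longrightarrow> continuous_on UNIV ((deriv ^^ k) f)"
  unfolding allderiv_def
  by (meson continuous_at_imp_continuous_on differentiable_imp_continuous_within)

lemma allderiv_zero_open:
  assumes "allderiv u" "open U" "\<And>x. x \<in> U \<Longrightarrow> u x = 0" "x \<in> U"
  shows "(deriv ^^ k) u x = 0"
  using assms(4)
proof (induction k arbitrary: x)
  case 0 then show ?case using assms(3) by simp
next
  case (Suc k)
  have "((\<lambda>x. 0) has_real_derivative 0) (at x)" by simp
  then have "((deriv ^^ k) u has_real_derivative 0) (at x)"
    using has_field_derivative_transform_within_open[of "\<lambda>x. 0" 0 x U "(deriv ^^ k) u"] Suc assms(2)
    by auto
  then show ?case using DERIV_imp_deriv by fastforce
qed

lemma allderiv_zero_outside: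
  assumes "allderiv u" "\<And>x. x \<notin> {a<..<b} \<Longrightarrow> u x = 0" "x \<notin> {a..b}"
  shows "(deriv ^^ k) u x = 0"
proof (rule allderiv_zero_open[OF assms(1), of "{..<a} \<union> {b<..}"])
  show "open ({..<a} \<union> {b<..})" by auto
qed (use assms in auto)

lemma test_support:
  assumes "test_fun \<phi>"
  obtains R where "R > 0" "\<And>k x. x \<notin> {-R..R} \<Longrightarrow> (deriv ^^ k) \<phi> x = 0"
proof -
  obtain R0 where R0: "\<And>x. \<phi> x \<noteq> 0 \<Longrightarrow> norm x \<le> R0"
    using assms unfolding test_fun_def bounded_iff by auto
  define R where "R = \<bar>R0\<bar> + 1"
  have "(deriv ^^ k) \<phi> x = 0" if "x \<notin> {-R..R}" for k x
    by (rule allderiv_zero_outside[OF test_allderiv[OF assms], of "-R" R])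
      (use R0 that in \<open>force simp: R_def\<close>)+
  moreover have "R > 0" unfolding R_def by simp
  ultimately show ?thesis using that by blast
qed

lemma ibp_iter:
  assumes f: "allderiv f" and sf: "\<And>x. x \<notin> {a<..<b} \<Longrightarrow> f x = 0" and phi: "allderiv \<phi>"
  shows "i \<le> t \<Longrightarrow> (LINT x|lborel. f x * (deriv ^^ t) \<phi> x)
     = (-1)^i * (LINT x|lborel. (deriv ^^ i) f x * (deriv ^^ (t - i)) \<phi> x)"
proof (induction i)
  case 0 then show ?case by simp
next
  case (Suc i)
  obtain j where j: "t - i = Suc j" using Suc.prems by (metis Suc_diff_le diff_Suc_Suc zero_less_Suc less_imp_Suc_add Suc_le_lessD zero_less_diff)
  have tj: "t - Suc i = j" using j by simp
  have s: "\<And>k x. x \<notin> {a..b} \<Longrightarrow> (deriv ^^ k) f x = 0"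
    by (rule allderiv_zero_outside[OF f sf])
  have "(LINT x|lborel. (deriv ^^ i) f x * (deriv ^^ (t - i)) \<phi> x)
       = - (LINT x|lborel. (deriv ^^ Suc i) f x * (deriv ^^ j) \<phi> x)"
    unfolding j
    by (rule ibp(1)[OF allderiv_has[OF f] allderiv_has[OF phi] allderiv_cont[OF f] allderiv_cont[OF phi],
          of a b]) (use s[of _ i] s[of _ "Suc i"] in auto)
  then show ?case using Suc by (simp add: tj)
qed




lemma emeasure_density_part:
  fixes k :: "real \<Rightarrow> real"
  assumes k: "integrable lborel k"
  shows "emeasure (density lborel (\<lambda>y. ennreal (max 0 (k y)))) {x<..}
      = ennreal (LINT y|lborel. indicator {x<..} y * max 0 (k y))"
proof -
  have km[measurable]: "k \<in> borel_measurable borel" using borel_measurable_integrable[OF k] by simp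
  have ip: "integrable lborel (\<lambda>y. indicator {x<..} y * max 0 (k y))"
    using integrable_mult_indicator[of "{x<..}" lborel "\<lambda>y. max 0 (k y)"] k by auto
  have "emeasure (density lborel (\<lambda>y. ennreal (max 0 (k y)))) {x<..}
      = (\<integral>\<^sup>+ y. ennreal (max 0 (k y)) * indicator {x<..} y \<partial>lborel)"
    by (rule emeasure_density) auto
  also have "\<dots> = (\<integral>\<^sup>+ y. ennreal (indicator {x<..} y * max 0 (k y)) \<partial>lborel)"
    by (intro nn_integral_cong) (auto simp: indicator_def)
  also have "\<dots> = ennreal (LINT y|lborel. indicator {x<..} y * max 0 (k y))"
    by (rule nn_integral_eq_integral[OF ip]) auto
  finally show ?thesis .
qed

lemma AE_zero_tails:
  fixes k :: "real \<Rightarrow> real"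
  assumes k: "integrable lborel k"
    and t: "\<And>x. (LINT y|lborel. indicator {x<..} y * k y) = 0"
  shows "AE y in lborel. k y = 0"
proof -
  have km[measurable]: "k \<in> borel_measurable borel" using borel_measurable_integrable[OF k] by simp
  have k2: "integrable lborel (\<lambda>y. - k y)" using k by simp
  have "density lborel (\<lambda>y. ennreal (max 0 (k y))) = density lborel (\<lambda>y. ennreal (max 0 (- k y)))"
  proof (rule measure_eqI_lessThan)
    fix x
    show "emeasure (density lborel (\<lambda>y. ennreal (max 0 (k y)))) {x<..} < \<infinity>"
      unfolding emeasure_density_part[OF k] by simp
    have i1: "integrable lborel (\<lambda>y. indicator {x<..} y * max 0 (k y))"
      using integrable_mult_indicator[of "{x<..}" lborel "\<lambda>y. max 0 (k y)"] k by auto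
    have i2: "integrable lborel (\<lambda>y. indicator {x<..} y * max 0 (- k y))"
      using integrable_mult_indicator[of "{x<..}" lborel "\<lambda>y. max 0 (- k y)"] k2 by auto
    have "(LINT y|lborel. indicator {x<..} y * max 0 (k y)) - (LINT y|lborel. indicator {x<..} y * max 0 (- k y))
        = (LINT y|lborel. indicator {x<..} y * max 0 (k y) - indicator {x<..} y * max 0 (- k y))"
      using Bochner_Integration.integral_diff[OF i1 i2] by simp
    also have "\<dots> = (LINT y|lborel. indicator {x<..} y * k y)"
      by (intro Bochner_Integration.integral_cong) (auto simp: indicator_def max_def)
    finally show "emeasure (density lborel (\<lambda>y. ennreal (max 0 (k y)))) {x<..} =
         emeasure (density lborel (\<lambda>y. ennreal (max 0 (- k y)))) {x<..}"
      unfolding emeasure_density_part[OF k] emeasure_density_part[OF k2] using t[of x] by simp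
  qed auto
  then have "AE y in lborel. ennreal (max 0 (k y)) = ennreal (max 0 (- k y))"
    by (intro sigma_finite_measure.density_unique[OF sigma_finite_lborel]) auto
  then show ?thesis
    by eventually_elim (auto simp: max_def split: if_splits)
qed




lemma cont_orth_tails:
  fixes k :: "real \<Rightarrow> real"
  assumes k: "integrable lborel k"
    and orth: "\<And>g. continuous_on UNIV g \<Longrightarrow> (LINT y|lborel. g y * k y) = 0"
  shows "(LINT y|lborel. indicator {x<..} y * k y) = 0"
proof -
  have km[measurable]: "k \<in> borel_measurable borel" using borel_measurable_integrable[OF k] by simp
  define g where "g n y = max 0 (min 1 (real (Suc n) * (y - x)))" for n y
  have gc: "continuous_on UNIV (g n)" for n unfolding g_def by (intro continuous_intros)
  have gm[measurable]: "g n \<in> borel_measurable borel" for n by (rule borel_measurable_continuous_onI[OF gc])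
  have "(\<lambda>n. LINT y|lborel. g n y * k y) \<longlonglongrightarrow> (LINT y|lborel. indicator {x<..} y * k y)"
  proof (rule integral_dominated_convergence[where w="\<lambda>y. \<bar>k y\<bar>"])
    show "AE y in lborel. (\<lambda>n. g n y * k y) \<longlonglongrightarrow> indicator {x<..} y * k y"
    proof (rule AE_I2)
      fix y
      show "(\<lambda>n. g n y * k y) \<longlonglongrightarrow> indicator {x<..} y * k y"
      proof (cases "y > x")
        case True
        obtain N :: nat where N: "1 / (y - x) < N" using reals_Archimedean2 by blast
        have "eventually (\<lambda>n. g n y * k y = indicator {x<..} y * k y) sequentially"
          unfolding eventually_sequentially
        proof (intro exI allI impI)
          fix n assume "N \<le> n"
          then have "1 / (y - x) < real (Suc n)" using N by linarith
          then have "1 < real (Suc n) * (y - x)" using True by (simp add: field_simps)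
          then show "g n y * k y = indicator {x<..} y * k y" using True by (simp add: g_def)
        qed
        then show ?thesis by (rule tendsto_eventually)
      next
        case False
        have "g n y = 0" for n
        proof -
          have "real (Suc n) * (y - x) \<le> 0" using False by (simp add: mult_nonneg_nonpos)
          then show ?thesis unfolding g_def by (simp add: min_def max_def)
        qed
        then show ?thesis using False by simp
      qed
    qed
  next
    fix n show "AE y in lborel. norm (g n y * k y) \<le> \<bar>k y\<bar>"
      by (rule AE_I2) (simp add: g_def abs_mult mult_left_le_one_le)
  next
    show "(\<lambda>y. indicator {x<..} y * k y) \<in> borel_measurable lborel" by simp
  next
    fix n show "(\<lambda>y. g n y * k y) \<in> borel_measurable lborel" by simp
  next
    show "integrable lborel (\<lambda>y. \<bar>k y\<bar>)" using k by simp
  qed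
  moreover have "(\<lambda>n. LINT y|lborel. g n y * k y) = (\<lambda>n. 0)" by (rule ext, rule orth[OF gc])
  ultimately have "(\<lambda>n. 0::real) \<longlonglongrightarrow> (LINT y|lborel. indicator {x<..} y * k y)" by simp
  then show ?thesis using LIMSEQ_unique[OF _ tendsto_const] by metis
qed

lemma cont_bound_Icc:
  fixes g :: "real \<Rightarrow> real"
  assumes "continuous_on UNIV g"
  obtains M where "\<And>x. x \<in> {a..b} \<Longrightarrow> \<bar>g x\<bar> \<le> M"
proof -
  have "bounded (g ` {a..b})"
    by (rule compact_imp_bounded[OF compact_continuous_image[OF continuous_on_subset[OF assms subset_UNIV] compact_Icc]])
  then obtain M where M: "\<forall>y\<in>g ` {a..b}. norm y \<le> M" unfolding bounded_iff by blast
  have "\<bar>g x\<bar> \<le> M" if "x \<in> {a..b}" for x using M[rule_format, OF imageI[OF that]] by simp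
  then show ?thesis by (rule that)
qed

lemma cont_mult_integrable:
  fixes k g :: "real \<Rightarrow> real"
  assumes k: "integrable lborel k" and sk: "\<And>x. x \<notin> {a..b} \<Longrightarrow> k x = 0"
    and g: "continuous_on UNIV g"
  shows "integrable lborel (\<lambda>y. g y * k y)"
proof -
  have km[measurable]: "k \<in> borel_measurable borel" using borel_measurable_integrable[OF k] by simp
  have gm[measurable]: "g \<in> borel_measurable borel" by (rule borel_measurable_continuous_onI[OF g])
  obtain M where M: "\<And>x. x \<in> {a..b} \<Longrightarrow> \<bar>g x\<bar> \<le> M" using cont_bound_Icc[OF g] by blast
  have iM: "integrable lborel (\<lambda>y. M * k y)" using k by simp
  show ?thesis
  proof (rule Bochner_Integration.integrable_bound[OF iM])
    show "AE x in lborel. norm (g x * k x) \<le> norm (M * k x)"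
    proof (rule AE_I2)
      fix x show "norm (g x * k x) \<le> norm (M * k x)"
      proof (cases "x \<in> {a..b}")
        case True
        then have "\<bar>g x\<bar> \<le> \<bar>M\<bar>" using M by force
        then show ?thesis by (simp add: abs_mult mult_right_mono)
      qed (use sk in simp)
    qed
    show "(\<lambda>x. g x * k x) \<in> borel_measurable lborel" by simp
  qed
qed

lemma poly_orth_cont:
  fixes k g :: "real \<Rightarrow> real"
  assumes k: "integrable lborel k" and sk: "\<And>x. x \<notin> {a..b} \<Longrightarrow> k x = 0"
    and orth: "\<And>p. real_polynomial_function p \<Longrightarrow> (LINT y|lborel. p y * k y) = 0"
    and g: "continuous_on UNIV g"
  shows "(LINT y|lborel. g y * k y) = 0"
proof -
  have km[measurable]: "k \<in> borel_measurable borel" using borel_measurable_integrable[OF k] by simp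
  define L where "L = (LINT y|lborel. \<bar>k y\<bar>)"
  have L0: "L \<ge> 0" unfolding L_def by simp
  have "\<bar>LINT y|lborel. g y * k y\<bar> \<le> e * L" if e: "e > 0" for e
  proof -
    have "\<exists>p. polynomial_function p \<and> (\<forall>x\<in>{a..b}. norm (g x - p x) < e)"
      by (rule Stone_Weierstrass_polynomial_function[OF compact_Icc continuous_on_subset[OF g subset_UNIV] e])
    then obtain p where p: "polynomial_function p" "\<And>x. x \<in> {a..b} \<Longrightarrow> norm (g x - p x) < e"
      by blast
    have pr: "real_polynomial_function p" using p(1) by (simp add: real_polynomial_function_eq)
    have pc: "continuous_on UNIV p" using pr
      by (metis continuous_on_polymonial_function real_polynomial_function_eq)
    have ig: "integrable lborel (\<lambda>y. g y * k y)" by (rule cont_mult_integrable[OF k sk g])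
    have ip: "integrable lborel (\<lambda>y. p y * k y)" by (rule cont_mult_integrable[OF k sk pc])
    have "(LINT y|lborel. g y * k y) = (LINT y|lborel. g y * k y) - (LINT y|lborel. p y * k y)"
      using orth[OF pr] by simp
    also have "\<dots> = (LINT y|lborel. (g y - p y) * k y)"
      using Bochner_Integration.integral_diff[OF ig ip] by (simp add: algebra_simps)
    finally have eq: "(LINT y|lborel. g y * k y) = (LINT y|lborel. (g y - p y) * k y)" .
    have "\<bar>LINT y|lborel. (g y - p y) * k y\<bar> \<le> (LINT y|lborel. \<bar>(g y - p y) * k y\<bar>)"
      by (rule integral_abs_bound)
    also have "\<dots> \<le> (LINT y|lborel. e * \<bar>k y\<bar>)"
    proof (rule integral_mono)
      show "integrable lborel (\<lambda>y. \<bar>(g y - p y) * k y\<bar>)"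
        using Bochner_Integration.integrable_diff[OF ig ip] by (simp add: algebra_simps)
      show "integrable lborel (\<lambda>y. e * \<bar>k y\<bar>)" using k by simp
      fix y show "\<bar>(g y - p y) * k y\<bar> \<le> e * \<bar>k y\<bar>"
      proof (cases "y \<in> {a..b}")
        case True
        then have "\<bar>g y - p y\<bar> \<le> e" using p(2)[of y] by simp
        then show ?thesis by (simp add: abs_mult mult_right_mono)
      qed (use sk in simp)
    qed
    also have "\<dots> = e * L" unfolding L_def by simp
    finally show ?thesis using eq by simp
  qed
  then show ?thesis
  proof -
    assume H: "\<And>e. e > 0 \<Longrightarrow> \<bar>LINT y|lborel. g y * k y\<bar> \<le> e * L"
    show ?thesis
    proof (rule ccontr)
      define c where "c = \<bar>LINT y|lborel. g y * k y\<bar>"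
      assume "(LINT y|lborel. g y * k y) \<noteq> 0"
      then have c: "c > 0" unfolding c_def by simp
      have "c \<le> (c / (2 * (L + 1))) * L" using H[of "c / (2 * (L + 1))"] c L0 unfolding c_def by simp
      also have "\<dots> < c"
      proof -
        have "L / (2 * (L + 1)) < 1" using L0 by (simp add: field_simps)
        then have "c * (L / (2 * (L + 1))) < c * 1" using c by (intro mult_strict_left_mono) auto
        then show ?thesis by simp
      qed
      finally show False by simp
    qed
  qed
qed




lemma E_nonneg: "0 \<le> E x" unfolding E_def by simp
lemma E_le1: "E x \<le> 1" unfolding E_def by simp
lemma E_pos: "x > 0 \<Longrightarrow> E x > 0" unfolding E_def by simp
lemma E_zero: "x \<le> 0 \<Longrightarrow> E x = 0" unfolding E_def by simp
lemma E_mono: "0 < x \<Longrightarrow> x \<le> y \<Longrightarrow> E x \<le> E y"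
  unfolding E_def by (simp add: frac_le)

definition bump :: "real \<Rightarrow> real \<Rightarrow> real \<Rightarrow> real" where
  "bump a b x = E (x - a) * E (b - x)"

lemma Cinf_bump: "Cinf (bump a b)"
proof -
  have 1: "Cinf (\<lambda>x. E (1 * x + - a))" by (rule Cinf_affine[OF Cinf_E])
  have 2: "Cinf (\<lambda>x. E ((-1) * x + b))" by (rule Cinf_affine[OF Cinf_E])
  have "bump a b = (\<lambda>x. E (1 * x + - a) * E ((-1) * x + b))"
    unfolding bump_def by (rule ext) simp
  then show ?thesis using Cinf_mult[OF 1 2] by simp
qed

lemma bump_zero: "x \<notin> {a<..<b} \<Longrightarrow> bump a b x = 0"
  unfolding bump_def by (auto simp: E_zero)

lemma bump_pos: "x \<in> {a<..<b} \<Longrightarrow> bump a b x > 0"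
  unfolding bump_def by (auto intro!: mult_pos_pos E_pos)

lemma bump_bounds: "0 \<le> bump a b x" "bump a b x \<le> 1"
  unfolding bump_def by (auto intro!: mult_nonneg_nonneg E_nonneg mult_le_one E_le1)

lemma Cinf_test:
  assumes "Cinf \<phi>" "\<And>x. x \<notin> {a..b} \<Longrightarrow> \<phi> x = 0"
  shows "test_fun \<phi>"
proof -
  have "{x. \<phi> x \<noteq> 0} \<subseteq> {a..b}" using assms(2) by blast
  then have "bounded {x. \<phi> x \<noteq> 0}" using bounded_subset[OF compact_imp_bounded[OF compact_Icc]] by blast
  then show ?thesis using Cinf_allderiv[OF assms(1)] unfolding test_fun_def allderiv_def by blast
qed

lemma test_bump_poly:
  assumes "real_polynomial_function p"
  shows "test_fun (\<lambda>x. bump a b x * p x)"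
  by (rule Cinf_test[OF Cinf_mult[OF Cinf_bump Cinf_poly[OF assms]], of a b])
    (use bump_zero in auto)

lemma AE_zero_local:
  fixes h :: "real \<Rightarrow> real"
  assumes hm[measurable]: "h \<in> borel_measurable borel"
    and loc: "\<And>a b. set_integrable lborel {a..b} h"
    and orth: "\<And>\<phi>. test_fun \<phi> \<Longrightarrow> (LINT x|lborel. h x * \<phi> x) = 0"
  shows "AE x in lborel. h x = 0"
proof -
  have main: "AE x in lborel. x \<in> {a<..<b} \<longrightarrow> h x = 0" for a b
  proof -
    define k where "k x = h x * bump a b x" for x
    have bc: "continuous_on UNIV (bump a b)" by (rule Cinf_cont[OF Cinf_bump])
    have bm[measurable]: "bump a b \<in> borel_measurable borel" by (rule borel_measurable_continuous_onI[OF bc])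
    have km: "k \<in> borel_measurable lborel" unfolding k_def by simp
    have sk: "k x = 0" if "x \<notin> {a..b}" for x using bump_zero[of x a b] that unfolding k_def by auto
    have ih: "integrable lborel (\<lambda>x. indicator {a..b} x *\<^sub>R h x)"
      using loc[of a b] unfolding set_integrable_def .
    have kint: "integrable lborel k"
    proof (rule Bochner_Integration.integrable_bound[OF ih km])
      show "AE x in lborel. norm (k x) \<le> norm (indicator {a..b} x *\<^sub>R h x)"
      proof (rule AE_I2)
        fix x show "norm (k x) \<le> norm (indicator {a..b} x *\<^sub>R h x)"
        proof (cases "x \<in> {a..b}")
          case True
          have "\<bar>h x * bump a b x\<bar> \<le> \<bar>h x\<bar>"
            using bump_bounds[of a b x] by (simp add: abs_mult mult_left_le)
          then show ?thesis using True by (simp add: k_def)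
        qed (use sk in simp)
      qed
    qed
    have po: "(LINT y|lborel. p y * k y) = 0" if p: "real_polynomial_function p" for p
    proof -
      have "(LINT y|lborel. p y * k y) = (LINT y|lborel. h y * (bump a b y * p y))"
        unfolding k_def by (simp add: ac_simps)
      also have "\<dots> = 0" by (rule orth[OF test_bump_poly[OF p]])
      finally show ?thesis .
    qed
    have co: "(LINT y|lborel. g y * k y) = 0" if "continuous_on UNIV g" for g
      by (rule poly_orth_cont[OF kint sk po that]) auto
    have "AE x in lborel. k x = 0"
      by (rule AE_zero_tails[OF kint cont_orth_tails[OF kint co]]) auto
    then show ?thesis
    proof (rule AE_mp, intro AE_I2 impI)
      fix x assume "k x = 0" "x \<in> {a<..<b}"
      then show "h x = 0" using bump_pos[of x a b] unfolding k_def by simp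
    qed
  qed
  have "AE x in lborel. \<forall>n::nat. x \<in> {-(real n + 1)<..<real n + 1} \<longrightarrow> h x = 0"
    unfolding AE_all_countable using main by blast
  then show ?thesis
  proof (rule AE_mp, intro AE_I2 impI)
    fix x assume H: "\<forall>n::nat. x \<in> {-(real n + 1)<..<real n + 1} \<longrightarrow> h x = 0"
    define n where "n = nat \<lceil>\<bar>x\<bar>\<rceil>"
    have "\<bar>x\<bar> \<le> real n" unfolding n_def by linarith
    then have "x \<in> {-(real n + 1)<..<real n + 1}" by auto
    then show "h x = 0" using H by blast
  qed
qed




lemma scale_derivs:
  assumes "Cinf u"
  shows "(deriv ^^ k) (\<lambda>x. u (c * x)) = (\<lambda>x. c ^ k * (deriv ^^ k) u (c * x))"
proof (induction k)
  case 0 then show ?case by simp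
next
  case (Suc k)
  have d: "((\<lambda>x. c ^ k * (deriv ^^ k) u (c * x)) has_real_derivative c ^ Suc k * (deriv ^^ Suc k) u (c * x)) (at x)" for x
  proof -
    have "((\<lambda>x. c * x) has_real_derivative c) (at x)" by (auto intro!: derivative_eq_intros)
    from DERIV_chain2[OF Cinf_funpow_has_deriv[OF assms] this]
    have "((\<lambda>x. (deriv ^^ k) u (c * x)) has_real_derivative (deriv ^^ Suc k) u (c * x) * c) (at x)" .
    from DERIV_cmult[OF this, of "c ^ k"] show ?thesis by (simp add: algebra_simps)
  qed
  have "(deriv ^^ Suc k) (\<lambda>x. u (c * x)) = deriv (\<lambda>x. c ^ k * (deriv ^^ k) u (c * x))"
    using Suc by simp
  also have "\<dots> = (\<lambda>x. c ^ Suc k * (deriv ^^ Suc k) u (c * x))"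
    using d DERIV_imp_deriv by blast
  finally show ?case .
qed

lemma gauss_rho_pos: "gauss_rho x > 0" unfolding gauss_rho_def by simp

lemma gauss_rho_le1: "gauss_rho x \<le> 1"
proof -
  have e: "exp (- (x^2) / 2) \<le> 1" by simp
  have s: "1 \<le> sqrt (2 * pi)" using pi_gt3 by simp
  have es: "exp (- (x^2) / 2) \<le> sqrt (2 * pi)" using e s by linarith
  have "exp (- (x^2) / 2) / sqrt (2 * pi) \<le> sqrt (2 * pi) / sqrt (2 * pi)"
    by (rule divide_right_mono[OF es]) simp
  then show ?thesis unfolding gauss_rho_def using s by simp
qed

lemma gauss_rho_mono: "\<bar>x\<bar> \<le> \<bar>y\<bar> \<Longrightarrow> gauss_rho y \<le> gauss_rho x"
proof -
  assume "\<bar>x\<bar> \<le> \<bar>y\<bar>"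
  then have "x^2 \<le> y^2" by (metis abs_le_square_iff)
  then show ?thesis unfolding gauss_rho_def by (simp add: divide_right_mono)
qed

lemma gauss_rho_cont: "continuous_on UNIV gauss_rho"
  unfolding gauss_rho_def by (intro continuous_intros) auto

lemma integrable_ind_Icc: "integrable lborel (indicator {a..b} :: real \<Rightarrow> real)"
  by (rule integrable_real_indicator) (simp_all add: emeasure_lborel_Icc_eq)

lemma L2rho_loc:
  assumes "L2rho u"
  shows "set_integrable lborel {a..b} u"
proof -
  have um[measurable]: "u \<in> borel_measurable borel" using assms unfolding L2rho_def by simp
  have ui: "integrable lborel (\<lambda>x. (u x)^2 * gauss_rho x)" using assms unfolding L2rho_def by simp
  define R where "R = \<bar>a\<bar> + \<bar>b\<bar>"
  define m where "m = gauss_rho R"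
  have m: "m > 0" unfolding m_def by (rule gauss_rho_pos)
  have i0: "integrable lborel (\<lambda>x. indicator {a..b} x * ((u x)^2 * gauss_rho x / m))"
    using integrable_mult_indicator[of "{a..b}" lborel "\<lambda>x. (u x)^2 * gauss_rho x / m"] ui by simp
  have i1: "integrable lborel (\<lambda>x. indicator {a..b} x + indicator {a..b} x * ((u x)^2 * gauss_rho x / m))"
    by (rule Bochner_Integration.integrable_add[OF integrable_ind_Icc i0])
  show ?thesis unfolding set_integrable_def
  proof (rule Bochner_Integration.integrable_bound[OF i1])
    show "(\<lambda>x. indicator {a..b} x *\<^sub>R u x) \<in> borel_measurable lborel" by simp
    show "AE x in lborel. norm (indicator {a..b} x *\<^sub>R u x) \<le> norm (indicator {a..b} x + indicator {a..b} x * ((u x)^2 * gauss_rho x / m))"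
    proof (rule AE_I2)
      fix x show "norm (indicator {a..b} x *\<^sub>R u x) \<le> norm (indicator {a..b} x + indicator {a..b} x * ((u x)^2 * gauss_rho x / m))"
      proof (cases "x \<in> {a..b}")
        case True
        then have "\<bar>x\<bar> \<le> \<bar>R\<bar>" unfolding R_def by auto
        then have "m \<le> gauss_rho x" unfolding m_def by (rule gauss_rho_mono)
        then have "(u x)^2 \<le> (u x)^2 * gauss_rho x / m" using m
          by (simp add: le_divide_eq mult_left_mono)
        moreover have "\<bar>u x\<bar> \<le> 1 + (u x)^2"
        proof -
          have h: "0 \<le> (\<bar>u x\<bar> - 1)^2" by simp
          have e: "(\<bar>u x\<bar> - 1)^2 = \<bar>u x\<bar>^2 - 2 * \<bar>u x\<bar> + 1" by (simp add: power2_eq_square algebra_simps)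
          have "\<bar>u x\<bar>^2 = (u x)^2" by simp
          then show ?thesis using h e abs_ge_zero[of "u x"] by linarith
        qed
        moreover have "0 \<le> (u x)^2 * gauss_rho x / m" using m gauss_rho_pos[of x] by simp
        ultimately show ?thesis using True by simp
      qed simp
    qed
  qed
qed

lemma loc_test_integrable:
  assumes loc: "\<And>a b. set_integrable lborel {a..b} u" and phi: "test_fun \<phi>"
  shows "integrable lborel (\<lambda>x. u x * \<phi> x)"
proof -
  obtain R where R: "\<And>k x. x \<notin> {-R..R} \<Longrightarrow> (deriv ^^ k) \<phi> x = 0"
    using test_support[OF phi] by blast
  have s0: "\<phi> x = 0" if "x \<notin> {-R..R}" for x using R[of x 0] that by simp
  define k where "k x = indicator {-R..R} x *\<^sub>R u x" for x
  have ki: "integrable lborel k" using loc[of "-R" R] unfolding set_integrable_def k_def .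
  have sk: "k x = 0" if "x \<notin> {-R..R}" for x using that unfolding k_def by simp
  have pc: "continuous_on UNIV \<phi>" using allderiv_cont[OF test_allderiv[OF phi], of 0] by simp
  have "integrable lborel (\<lambda>y. \<phi> y * k y)" by (rule cont_mult_integrable[OF ki sk pc])
  moreover have "(\<lambda>y. \<phi> y * k y) = (\<lambda>x. u x * \<phi> x)"
  proof (rule ext)
    fix x show "\<phi> x * k x = u x * \<phi> x"
      by (cases "x \<in> {-R..R}") (auto simp: k_def s0)
  qed
  ultimately show ?thesis by simp
qed

lemma integral_lower:
  fixes u :: "real \<Rightarrow> real"
  assumes ui: "integrable lborel u" and nn: "\<And>x. 0 \<le> u x" and lb: "\<And>x. x \<in> {a..b} \<Longrightarrow> c \<le> u x"
    and ab: "a \<le> b" and c: "0 \<le> c"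
  shows "c * (b - a) \<le> (LINT x|lborel. u x)"
proof -
  have "(LINT x|lborel. indicator {a..b} x * c) = c * (b - a)"
    using ab by (simp add: mult.commute)
  moreover have "(LINT x|lborel. indicator {a..b} x * c) \<le> (LINT x|lborel. u x)"
  proof (rule integral_mono[OF _ ui])
    show "integrable lborel (\<lambda>x. indicator {a..b} x * c)"
      by (rule Bochner_Integration.integrable_mult_left) (rule integrable_ind_Icc)
    fix x show "indicator {a..b} x * c \<le> u x"
      using lb[of x] nn[of x] by (cases "x \<in> {a..b}") auto
  qed
  ultimately show ?thesis using ab by (simp add: mult.commute)
qed




definition fb :: "real \<Rightarrow> real \<Rightarrow> real" where
  "fb \<delta> x = bump 0 1 (x / \<delta>)"

lemma fb_eq: "fb \<delta> = (\<lambda>x. bump 0 1 ((1/\<delta>) * x))"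
  unfolding fb_def by (rule ext) simp

lemma Cinf_fb: "Cinf (fb \<delta>)"
proof -
  have "Cinf (\<lambda>x. bump 0 1 ((1/\<delta>) * x + 0))" by (rule Cinf_affine[OF Cinf_bump])
  then show ?thesis unfolding fb_eq by simp
qed

lemma fb_derivs: "(deriv ^^ k) (fb \<delta>) = (\<lambda>x. (1/\<delta>) ^ k * (deriv ^^ k) (bump 0 1) (x / \<delta>))"
  unfolding fb_eq scale_derivs[OF Cinf_bump] by (rule ext) simp

lemma fb_zero: assumes "\<delta> > 0" "x \<notin> {0<..<\<delta>}" shows "fb \<delta> x = 0"
proof -
  have "x / \<delta> \<notin> {0<..<1}" using assms by (auto simp: field_simps)
  then show ?thesis unfolding fb_def by (rule bump_zero)
qed

lemma fb_nonneg: "0 \<le> fb \<delta> x" unfolding fb_def by (rule bump_bounds)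

lemma fb_lower:
  assumes "\<delta> > 0" "x \<in> {\<delta>/4..3*\<delta>/4}"
  shows "(E (1/4))^2 \<le> fb \<delta> x"
proof -
  have y: "1/4 \<le> x / \<delta>" "x / \<delta> \<le> 3/4" using assms by (auto simp: field_simps)
  have "E (1/4) \<le> E (x / \<delta> - 0)" using y by (intro E_mono) auto
  moreover have "E (1/4) \<le> E (1 - x / \<delta>)" using y by (intro E_mono) auto
  ultimately have "E (1/4) * E (1/4) \<le> E (x / \<delta> - 0) * E (1 - x / \<delta>)"
    by (intro mult_mono) (auto simp: E_nonneg)
  then show ?thesis unfolding fb_def bump_def by (simp add: power2_eq_square)
qed

lemma bump_deriv_bound: "\<exists>M. \<forall>k x. \<bar>(deriv ^^ k) (bump 0 1) x\<bar> \<le> M k"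
proof -
  have "\<exists>m. \<forall>x. \<bar>(deriv ^^ k) (bump 0 1) x\<bar> \<le> m" for k
  proof -
    have c: "continuous_on UNIV ((deriv ^^ k) (bump 0 1))"
      by (rule allderiv_cont[OF Cinf_allderiv[OF Cinf_bump]])
    obtain m where m: "\<And>x. x \<in> {0..1} \<Longrightarrow> \<bar>(deriv ^^ k) (bump 0 1) x\<bar> \<le> m"
      using cont_bound_Icc[OF c] by blast
    have "\<bar>(deriv ^^ k) (bump 0 1) x\<bar> \<le> max m 0" for x
    proof (cases "x \<in> {0..1}")
      case True then show ?thesis using m by force
    next
      case False
      have "(deriv ^^ k) (bump 0 1) x = 0"
        by (rule allderiv_zero_outside[OF Cinf_allderiv[OF Cinf_bump] _ False]) (rule bump_zero)
      then show ?thesis by simp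
    qed
    then show ?thesis by blast
  qed
  then show ?thesis by metis
qed




lemma weak_derivs_fb:
  assumes d: "\<delta> > 0"
  shows "weak_derivs \<alpha> (fb \<delta>) (\<lambda>\<tau>. (deriv ^^ \<tau>) (fb \<delta>))"
  unfolding weak_derivs_def
proof (intro conjI ballI allI impI)
  show "(deriv ^^ 0) (fb \<delta>) = fb \<delta>" by simp
  fix \<tau> \<phi> assume "\<tau> \<in> {1..\<alpha>}" "test_fun \<phi>"
  have "(LINT x|lborel. fb \<delta> x * (deriv ^^ \<tau>) \<phi> x)
      = (-1)^\<tau> * (LINT x|lborel. (deriv ^^ \<tau>) (fb \<delta>) x * (deriv ^^ (\<tau> - \<tau>)) \<phi> x)"
    by (rule ibp_iter[OF Cinf_allderiv[OF Cinf_fb] _ test_allderiv[OF \<open>test_fun \<phi>\<close>]])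
      (use fb_zero[OF d] in auto)
  then show "(LINT x|lborel. fb \<delta> x * (deriv ^^ \<tau>) \<phi> x)
      = (-1)^\<tau> * (LINT x|lborel. (deriv ^^ \<tau>) (fb \<delta>) x * \<phi> x)" by simp
qed

lemma fb_deriv_zero: assumes "\<delta> > 0" "x \<notin> {0..\<delta>}" shows "(deriv ^^ k) (fb \<delta>) x = 0"
  by (rule allderiv_zero_outside[OF Cinf_allderiv[OF Cinf_fb] _ assms(2)]) (use fb_zero[OF assms(1)] in auto)

lemma fb_deriv_cont: "continuous_on UNIV ((deriv ^^ k) (fb \<delta>))"
  by (rule allderiv_cont[OF Cinf_allderiv[OF Cinf_fb]])

lemma L2rho_fb:
  assumes d: "\<delta> > 0"
  shows "L2rho ((deriv ^^ k) (fb \<delta>))"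
  unfolding L2rho_def
proof
  show "(deriv ^^ k) (fb \<delta>) \<in> borel_measurable borel" by (rule borel_measurable_continuous_onI[OF fb_deriv_cont])
  show "integrable lborel (\<lambda>x. ((deriv ^^ k) (fb \<delta>) x)^2 * gauss_rho x)"
    by (rule compact_supp_integrable[of _ 0 \<delta>])
      (auto intro!: continuous_intros fb_deriv_cont gauss_rho_cont simp: fb_deriv_zero[OF d]
        intro: continuous_on_compose2[OF gauss_rho_cont])
qed

lemma sobH_fb: "\<delta> > 0 \<Longrightarrow> sobH \<alpha> (fb \<delta>)"
  unfolding sobH_def using fb_deriv_cont[of 0] weak_derivs_fb L2rho_fb by fastforce

lemma norm_unique:
  assumes d: "\<delta> > 0" and G: "weak_derivs \<alpha> (fb \<delta>) G" "\<forall>\<tau>\<le>\<alpha>. L2rho (G \<tau>)" and t: "\<tau> \<le> \<alpha>"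
  shows "L2rho_norm_sq (G \<tau>) = L2rho_norm_sq ((deriv ^^ \<tau>) (fb \<delta>))"
proof (cases "\<tau> = 0")
  case True then show ?thesis using G(1) unfolding weak_derivs_def by simp
next
  case False
  let ?g = "(deriv ^^ \<tau>) (fb \<delta>)"
  have LG: "L2rho (G \<tau>)" using G(2) t by simp
  have Gm[measurable]: "G \<tau> \<in> borel_measurable borel" using LG unfolding L2rho_def by simp
  have gm[measurable]: "?g \<in> borel_measurable borel" by (rule borel_measurable_continuous_onI[OF fb_deriv_cont])
  have locG: "set_integrable lborel {a..b} (G \<tau>)" for a b by (rule L2rho_loc[OF LG])
  have locg: "set_integrable lborel {a..b} ?g" for a b by (rule L2rho_loc[OF L2rho_fb[OF d]])
  have "AE x in lborel. G \<tau> x - ?g x = 0"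
  proof (rule AE_zero_local)
    show "(\<lambda>x. G \<tau> x - ?g x) \<in> borel_measurable borel" by measurable
    fix a b
    show "set_integrable lborel {a..b} (\<lambda>x. G \<tau> x - ?g x)"
      using Bochner_Integration.integrable_diff[OF locG[of a b, unfolded set_integrable_def] locg[of a b, unfolded set_integrable_def]]
      unfolding set_integrable_def by (simp add: right_diff_distrib)
  next
    fix \<phi> assume phi: "test_fun \<phi>"
    have i1: "integrable lborel (\<lambda>x. G \<tau> x * \<phi> x)" by (rule loc_test_integrable[OF locG phi])
    have i2: "integrable lborel (\<lambda>x. ?g x * \<phi> x)" by (rule loc_test_integrable[OF locg phi])
    have t1: "\<tau> \<in> {1..\<alpha>}" using t False by auto
    have e1: "(LINT x|lborel. fb \<delta> x * (deriv ^^ \<tau>) \<phi> x) = (-1)^\<tau> * (LINT x|lborel. G \<tau> x * \<phi> x)"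
      using G(1) t1 phi unfolding weak_derivs_def by blast
    have e2: "(LINT x|lborel. fb \<delta> x * (deriv ^^ \<tau>) \<phi> x) = (-1)^\<tau> * (LINT x|lborel. ?g x * \<phi> x)"
      using weak_derivs_fb[OF d, of \<alpha>] t1 phi unfolding weak_derivs_def by blast
    have "(LINT x|lborel. G \<tau> x * \<phi> x) = (LINT x|lborel. ?g x * \<phi> x)"
      using e1 e2 by simp
    then show "(LINT x|lborel. (G \<tau> x - ?g x) * \<phi> x) = 0"
      using Bochner_Integration.integral_diff[OF i1 i2] by (simp add: left_diff_distrib)
  qed
  then have "AE x in lborel. (G \<tau> x)^2 * gauss_rho x = (?g x)^2 * gauss_rho x"
    by eventually_elim simp
  moreover have rm[measurable]: "gauss_rho \<in> borel_measurable borel"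
    by (rule borel_measurable_continuous_onI[OF gauss_rho_cont])
  moreover have "(\<lambda>x. (G \<tau> x)^2 * gauss_rho x) \<in> borel_measurable lborel" by simp
  moreover have "(\<lambda>x. (?g x)^2 * gauss_rho x) \<in> borel_measurable lborel" by simp
  ultimately show ?thesis unfolding L2rho_norm_sq_def
    by (intro integral_cong_AE) auto
qed





lemma main_delta:
  fixes \<alpha> n :: nat and w \<xi> :: "nat \<Rightarrow> real" and \<delta> :: real and M :: "nat \<Rightarrow> real"
  assumes M: "\<And>k x. \<bar>(deriv ^^ k) (bump 0 1) x\<bar> \<le> M k"
    and d: "0 < \<delta>" "\<delta> \<le> 1" and xi: "\<forall>j<n. \<xi> j \<notin> {0<..<\<delta>}"
  shows "ereal ((E (1/4))^2 * gauss_rho 1 / (2 * sqrt (1 + (\<Sum>\<tau>\<le>\<alpha>. (M \<tau>)^2))) * \<delta> powr (real \<alpha> + 1/2))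
     \<le> wce \<alpha> n w \<xi>"
proof -
  define K where "K = 1 + (\<Sum>\<tau>\<le>\<alpha>. (M \<tau>)^2)"
  define m0 where "m0 = (E (1/4))^2"
  define r1 where "r1 = gauss_rho 1"
  define c0 where "c0 = m0 * r1"
  define f where "f = fb \<delta>"
  define g where "g = (\<lambda>\<tau>. (deriv ^^ \<tau>) f)"
  have K: "K \<ge> 1" unfolding K_def by (simp add: sum_nonneg)
  have m0: "m0 > 0" unfolding m0_def using E_pos[of "1/4"] by simp
  have r1: "r1 > 0" unfolding r1_def by (rule gauss_rho_pos)
  have c0: "c0 > 0" unfolding c0_def using m0 r1 by simp
  have rm[measurable]: "gauss_rho \<in> borel_measurable borel"
    by (rule borel_measurable_continuous_onI[OF gauss_rho_cont])
  have fc: "continuous_on UNIV f" unfolding f_def using fb_deriv_cont[of 0] by simp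
  have fm[measurable]: "f \<in> borel_measurable borel" by (rule borel_measurable_continuous_onI[OF fc])
  have fz: "f x = 0" if "x \<notin> {0..\<delta>}" for x unfolding f_def using fb_zero[OF d(1)] that by auto
  have mid: "m0 \<le> f x" "r1 \<le> gauss_rho x" if "x \<in> {\<delta>/4..3*\<delta>/4}" for x
  proof -
    show "m0 \<le> f x" unfolding m0_def f_def by (rule fb_lower[OF d(1) that])
    have "\<bar>x\<bar> \<le> \<bar>1\<bar>" using that d by auto
    then show "r1 \<le> gauss_rho x" unfolding r1_def by (rule gauss_rho_mono)
  qed
  have fnn: "0 \<le> f x" for x unfolding f_def by (rule fb_nonneg)
  
  have quad0: "quad n w \<xi> f = 0"
    unfolding quad_def f_def using xi fb_zero[OF d(1)] by simp
  have fri: "integrable lborel (\<lambda>x. f x * gauss_rho x)"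
    by (rule compact_supp_integrable[of _ 0 \<delta>]) (auto intro!: continuous_intros fc gauss_rho_cont simp: fz)
  have Nlow: "c0 * (\<delta> / 2) \<le> gauss_int f"
  proof -
    have "c0 * (3*\<delta>/4 - \<delta>/4) \<le> (LINT x|lborel. f x * gauss_rho x)"
    proof (rule integral_lower[OF fri])
      fix x show "0 \<le> f x * gauss_rho x" unfolding f_def using fb_nonneg gauss_rho_pos[of x] by simp
    next
      fix x assume "x \<in> {\<delta>/4..3*\<delta>/4}"
      then show "c0 \<le> f x * gauss_rho x" unfolding c0_def using mid m0 r1 fnn by (intro mult_mono) auto
    qed (use d c0 in auto)
    then show ?thesis unfolding gauss_int_def by simp
  qed
  have "0 < c0 * (\<delta> / 2)" using c0 d by simp
  then have gi0: "0 < gauss_int f" using Nlow by linarith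
  
  define G where "G = (SOME g. weak_derivs \<alpha> f g \<and> (\<forall>\<tau>\<le>\<alpha>. L2rho (g \<tau>)))"
  have ex: "\<exists>g. weak_derivs \<alpha> f g \<and> (\<forall>\<tau>\<le>\<alpha>. L2rho (g \<tau>))"
    unfolding f_def using weak_derivs_fb[OF d(1)] L2rho_fb[OF d(1)] by blast
  have G: "weak_derivs \<alpha> f G \<and> (\<forall>\<tau>\<le>\<alpha>. L2rho (G \<tau>))"
    unfolding G_def by (rule someI_ex[OF ex])
  have Geq: "L2rho_norm_sq (G \<tau>) = L2rho_norm_sq (g \<tau>)" if "\<tau> \<le> \<alpha>" for \<tau>
    unfolding g_def f_def by (rule norm_unique[OF d(1) G[unfolded f_def, THEN conjunct1] G[unfolded f_def, THEN conjunct2] that])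
  have S: "sob_norm \<alpha> f = sqrt (\<Sum>\<tau>\<le>\<alpha>. L2rho_norm_sq (g \<tau>))"
    unfolding sob_norm_def Let_def G_def[symmetric] using Geq by simp
  have gc: "continuous_on UNIV (g \<tau>)" for \<tau> unfolding g_def f_def by (rule fb_deriv_cont)
  have gz: "g \<tau> x = 0" if "x \<notin> {0..\<delta>}" for \<tau> x unfolding g_def f_def using fb_deriv_zero[OF d(1) that] .
  have gform: "g \<tau> x = (1/\<delta>)^\<tau> * (deriv ^^ \<tau>) (bump 0 1) (x / \<delta>)" for \<tau> x
    unfolding g_def f_def fb_derivs by simp
  have g2i: "integrable lborel (\<lambda>x. (g \<tau> x)^2 * gauss_rho x)" for \<tau>
    by (rule compact_supp_integrable[of _ 0 \<delta>]) (auto intro!: continuous_intros gc gauss_rho_cont simp: gz)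
  have L2nn: "0 \<le> L2rho_norm_sq (g \<tau>)" for \<tau> unfolding L2rho_norm_sq_def
    by (intro integral_nonneg_AE AE_I2 mult_nonneg_nonneg) (simp_all add: less_imp_le[OF gauss_rho_pos])
  have L2up: "L2rho_norm_sq (g \<tau>) \<le> \<delta> * (1/\<delta>)^(2*\<alpha>) * (M \<tau>)^2" if t: "\<tau> \<le> \<alpha>" for \<tau>
  proof -
    define B where "B = ((1/\<delta>)^\<tau> * M \<tau>)^2"
    have "L2rho_norm_sq (g \<tau>) \<le> (LINT x|lborel. indicator {0..\<delta>} x * B)"
      unfolding L2rho_norm_sq_def
    proof (rule integral_mono[OF g2i])
      show "integrable lborel (\<lambda>x. indicator {0..\<delta>} x * B)"
        by (rule Bochner_Integration.integrable_mult_left) (rule integrable_ind_Icc)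
      fix x show "(g \<tau> x)^2 * gauss_rho x \<le> indicator {0..\<delta>} x * B"
      proof (cases "x \<in> {0..\<delta>}")
        case True
        have "\<bar>g \<tau> x\<bar> \<le> (1/\<delta>)^\<tau> * M \<tau>"
        proof -
          have "\<bar>(1/\<delta>)^\<tau>\<bar> = (1/\<delta>)^\<tau>" using d by simp
          then show ?thesis unfolding gform abs_mult using M[of \<tau> "x/\<delta>"] d
            by (simp add: mult_left_mono)
        qed
        then have "(g \<tau> x)^2 \<le> B" unfolding B_def
          by (metis abs_ge_zero power2_abs power_mono order_trans)
        moreover have "(g \<tau> x)^2 * gauss_rho x \<le> (g \<tau> x)^2"
          using gauss_rho_le1[of x] by (simp add: mult_left_le)
        ultimately show ?thesis using True by simp
      qed (simp add: gz)
    qed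
    also have "\<dots> = \<delta> * B" using d by (simp add: mult.commute)
    also have "\<dots> \<le> \<delta> * (1/\<delta>)^(2*\<alpha>) * (M \<tau>)^2"
    proof -
      have "(1/\<delta>)^(2*\<tau>) \<le> (1/\<delta>)^(2*\<alpha>)" using d t by (intro power_increasing) auto
      then have "B \<le> (1/\<delta>)^(2*\<alpha>) * (M \<tau>)^2" unfolding B_def
        by (simp add: power_mult_distrib power_mult[symmetric] mult.commute mult_left_mono)
      then show ?thesis using d by (simp add: mult.assoc mult_left_mono)
    qed
    finally show ?thesis .
  qed
  define Sb where "Sb = sqrt (\<delta> * (1/\<delta>)^(2*\<alpha>) * K)"
  have Sup: "sob_norm \<alpha> f \<le> Sb"
  proof -
    have "(\<Sum>\<tau>\<le>\<alpha>. L2rho_norm_sq (g \<tau>)) \<le> (\<Sum>\<tau>\<le>\<alpha>. \<delta> * (1/\<delta>)^(2*\<alpha>) * (M \<tau>)^2)"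
      by (rule sum_mono) (rule L2up, simp)
    also have "\<dots> = \<delta> * (1/\<delta>)^(2*\<alpha>) * (\<Sum>\<tau>\<le>\<alpha>. (M \<tau>)^2)" by (simp add: sum_distrib_left)
    also have "\<dots> \<le> \<delta> * (1/\<delta>)^(2*\<alpha>) * K" unfolding K_def using d by (intro mult_left_mono) auto
    finally show ?thesis unfolding S Sb_def by simp
  qed
  have Spos: "sob_norm \<alpha> f > 0"
  proof -
    have f2i: "integrable lborel (\<lambda>x. (f x)^2 * gauss_rho x)" using g2i[of 0] by (simp add: g_def)
    have "m0 * m0 * r1 * (3*\<delta>/4 - \<delta>/4) \<le> (LINT x|lborel. (f x)^2 * gauss_rho x)"
    proof (rule integral_lower[OF f2i])
      fix x assume "x \<in> {\<delta>/4..3*\<delta>/4}"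
      then show "m0 * m0 * r1 \<le> (f x)^2 * gauss_rho x" unfolding power2_eq_square using mid m0 r1 fnn
        by (intro mult_mono) auto
    qed (use d m0 r1 in \<open>auto intro!: mult_nonneg_nonneg simp: less_imp_le[OF gauss_rho_pos]\<close>)
    moreover have "0 < m0 * m0 * r1 * (3*\<delta>/4 - \<delta>/4)" using m0 r1 d by simp
    ultimately have "0 < L2rho_norm_sq (g 0)" unfolding L2rho_norm_sq_def g_def by simp
    moreover have "L2rho_norm_sq (g 0) \<le> (\<Sum>\<tau>\<le>\<alpha>. L2rho_norm_sq (g \<tau>))"
      by (rule member_le_sum) (auto intro: L2nn)
    ultimately show ?thesis unfolding S by simp
  qed
  
  have sd: "sqrt \<delta> > 0" using d by simp
  have Sb_eq: "Sb = sqrt \<delta> * (1/\<delta>)^\<alpha> * sqrt K"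
    unfolding Sb_def using d K
    by (simp add: real_sqrt_mult power_mult real_sqrt_power)
  have pw: "\<delta> powr (real \<alpha> + 1/2) = \<delta>^\<alpha> * sqrt \<delta>"
    using d by (simp add: powr_add powr_realpow powr_half_sqrt)
  have rhs: "c0 / (2 * sqrt K) * \<delta> powr (real \<alpha> + 1/2) = (c0 * (\<delta> / 2)) / Sb"
  proof -
    have "\<delta> = sqrt \<delta> * sqrt \<delta>" using d by simp
    then have "(c0 * (\<delta> / 2)) / Sb = c0 * (sqrt \<delta> * sqrt \<delta>) / (2 * (sqrt \<delta> * (1/\<delta>)^\<alpha> * sqrt K))"
      unfolding Sb_eq by simp
    also have "\<dots> = c0 * sqrt \<delta> * \<delta>^\<alpha> / (2 * sqrt K)"
      using sd d K by (simp add: field_simps power_one_over)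
    finally show ?thesis unfolding pw by simp
  qed
  have "c0 / (2 * sqrt K) * \<delta> powr (real \<alpha> + 1/2) \<le> \<bar>gauss_int f - quad n w \<xi> f\<bar> / sob_norm \<alpha> f"
  proof -
    have "(c0 * (\<delta> / 2)) / Sb \<le> gauss_int f / Sb"
      using Nlow Spos Sup by (intro divide_right_mono) auto
    also have "\<dots> \<le> gauss_int f / sob_norm \<alpha> f"
      using gi0 Spos Sup by (intro divide_left_mono) auto
    finally show ?thesis unfolding rhs quad0 using gi0 by simp
  qed
  moreover have "f \<in> {f. sobH \<alpha> f \<and> f \<noteq> (\<lambda>_. 0)}"
  proof -
    have "f (\<delta>/2) > 0" using mid(1)[of "\<delta>/2"] m0 d by simp
    then have "f \<noteq> (\<lambda>_. 0)" by auto
    then show ?thesis unfolding f_def using sobH_fb[OF d(1)] by simp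
  qed
  then have "ereal (\<bar>gauss_int f - quad n w \<xi> f\<bar> / sob_norm \<alpha> f) \<le> wce \<alpha> n w \<xi>"
    unfolding wce_def by (rule SUP_upper)
  ultimately show ?thesis unfolding c0_def m0_def r1_def K_def[symmetric]
    by (meson ereal_less_eq(3) order_trans)
qed


theorem corollary3p3:
  fixes \<alpha> :: nat
  assumes "\<alpha> \<ge> 1"
  shows "\<exists>C>0.
     (\<forall>n w \<xi> \<delta>. strict_mono_on {..<n} \<xi> \<and> 0 < \<delta> \<and> \<delta> \<le> 1 \<and>
        (\<forall>j<n. \<xi> j \<notin> {0<..<\<delta>})
        \<longrightarrow> wce \<alpha> n w \<xi> \<ge> ereal (C * \<delta> powr (real \<alpha> + 1/2)))
   \<and> (\<forall>n w \<xi> (r::real). n \<ge> 1 \<and> strict_mono_on {..<n} \<xi> \<and> 0 < r \<and>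
        (\<forall>j<n. \<xi> j \<notin> {0<..<real n powr (-r)})
        \<longrightarrow> wce \<alpha> n w \<xi> \<ge> ereal (C * real n powr (- r * real \<alpha> - r / 2)))"
proof -
  obtain M where M: "\<And>k x. \<bar>(deriv ^^ k) (bump 0 1) x\<bar> \<le> M k"
    using bump_deriv_bound by blast
  define C where "C = (E (1/4))^2 * gauss_rho 1 / (2 * sqrt (1 + (\<Sum>\<tau>\<le>\<alpha>. (M \<tau>)^2)))"
  have Cpos: "C > 0"
  proof -
    have "0 < 1 + (\<Sum>\<tau>\<le>\<alpha>. (M \<tau>)^2)" by (simp add: add_pos_nonneg sum_nonneg)
    then show ?thesis unfolding C_def using E_pos[of "1/4"] gauss_rho_pos[of 1] by simp
  qed
  have P1: "wce \<alpha> n w \<xi> \<ge> ereal (C * \<delta> powr (real \<alpha> + 1/2))"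
    if "0 < \<delta>" "\<delta> \<le> 1" "\<forall>j<n. \<xi> j \<notin> {0<..<\<delta>}" for n :: nat and w \<xi> :: "nat \<Rightarrow> real" and \<delta> :: real
    unfolding C_def by (rule main_delta[OF M that])
  show ?thesis
  proof (intro exI[of _ C] conjI allI impI Cpos)
    fix n :: nat and w \<xi> :: "nat \<Rightarrow> real" and \<delta> :: real
    assume "strict_mono_on {..<n} \<xi> \<and> 0 < \<delta> \<and> \<delta> \<le> 1 \<and> (\<forall>j<n. \<xi> j \<notin> {0<..<\<delta>})"
    then show "wce \<alpha> n w \<xi> \<ge> ereal (C * \<delta> powr (real \<alpha> + 1/2))" using P1 by blast
  next
    fix n :: nat and w \<xi> :: "nat \<Rightarrow> real" and r :: real
    assume H: "n \<ge> 1 \<and> strict_mono_on {..<n} \<xi> \<and> 0 < r \<and> (\<forall>j<n. \<xi> j \<notin> {0<..<real n powr (-r)})"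
    define \<delta> where "\<delta> = real n powr (-r)"
    have n1: "real n \<ge> 1" using H by simp
    have d0: "0 < \<delta>" unfolding \<delta>_def using n1 by simp
    have "1 \<le> real n powr r" using n1 H by (intro ge_one_powr_ge_zero) auto
    then have d1: "\<delta> \<le> 1" unfolding \<delta>_def using n1 by (simp add: powr_minus divide_le_eq_1 field_simps)
    have "wce \<alpha> n w \<xi> \<ge> ereal (C * \<delta> powr (real \<alpha> + 1/2))"
      by (rule P1[OF d0 d1]) (use H in \<open>simp add: \<delta>_def\<close>)
    moreover have "\<delta> powr (real \<alpha> + 1/2) = real n powr (- r * real \<alpha> - r / 2)"
      unfolding \<delta>_def using n1 by (simp add: powr_powr algebra_simps)
    ultimately show "wce \<alpha> n w \<xi> \<ge> ereal (C * real n powr (- r * real \<alpha> - r / 2))" by simp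
  qed
qed


end
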